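(* Let $n\ge 1$ and let $G=(N,\{\Sigma_i\mid i\in N\},S,o)$ be a game form. Then its $Ł_n$-valued effectivity function $E_G$ is a truly playable $Ł_n$-valued effectivity function.
   Context: For a positive integer $n$ let $Ł_n=\{0,\frac1n,\dots,\frac{n-1}{n},1\}$ with the Łukasiewicz operations $\neg x=1-x$, $x\oplus y=\min(x+y,1)$, $x\odot y=\max(x+y-1,0)$, $x\wedge y=\min(x,y)$, $x\vee y=\max(x,y)$. For a set $S$, the operations are applied to functions in $Ł_n^S$ pointwise; $0,1$ also denote constant functions; $\chi_Y$ is the characteristic function of $Y\subseteq S$. Standing assumptions: $N$ is a finite set of players, $S$ a set of outcome states, $|N|\ge2$, $|S|\ge 2$. Subsets $C\subseteq N$ are coalitions, $\overline C=N\setminus C$. A game form is $G=(N,\{\Sigma_i\mid i\in N\},S,o)$ with nonempty strategy sets $\Sigma_i$ and outcome map $o:\prod_{i\in N}\Sigma_i\to S$; for $\sigma_C\in\prod_{i\in C}\Sigma_i$, $\sigma_{\overline C}\in\prod_{i\in\overline C}\Sigma_i$, $\sigma_C\sigma_{\overline C}$ is the combined profile. The $Ł_n$-valued effectivity function of $G$ is $E_G(C,f)=\max_{\sigma_C}\min_{\sigma_{\overline C}} f(o(\sigma_C\sigma_{\overline C}))$ for $C\subseteq N$, $f\in Ł_n^S$. An $Ł_n$-valued effectivity function is any map $E:\mathcal P N\times Ł_n^S\to Ł_n$. It is: outcome monotonic if $f\ge g$ implies $E(C,f)\ge E(C,g)$ for all $C$; $N$-maximal if $\neg E(\varnothing,\neg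 f)\le E(N,f)$ for all $f$; superadditive if $E(C_1,f)\wedge E(C_2,g)\le E(C_1\cup C_2,f\wedge g)$ whenever $C_1\cap C_2=\varnothing$; homogeneous if $E(C,f\oplus f)=E(C,f)\oplus E(C,f)$ and $E(C,f\odot f)=E(C,f)\odot E(C,f)$ for all $C,f$; has liveness if $E(C,1)=1$ for all $C$; has safety if $E(C,0)=0$ for all $C$; principal if there is $g\in Ł_n^S$ with $\{f\mid E(\varnothing,f)=1\}=\{f\mid f\ge g\odot\cdots\odot g\ (n\text{ factors})\}$. $E$ is playable if it is outcome monotonic, $N$-maximal, superadditive, homogeneous and has liveness and safety; truly playable if playable and principal. *)

theory Defs
  imports "HOL-Library.FuncSet" Complex_Main
begin

definition Luk :: "nat \<Rightarrow> real set" where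
  "Luk n = {real k / real n | k. k \<le> n}"

definition lneg :: "real \<Rightarrow> real" where "lneg x = 1 - x"
definition loplus :: "real \<Rightarrow> real \<Rightarrow> real" where "loplus x y = min (x + y) 1"
definition lodot :: "real \<Rightarrow> real \<Rightarrow> real" where "lodot x y = max (x + y - 1) 0"

fun lodot_pow :: "nat \<Rightarrow> real \<Rightarrow> real" where
  "lodot_pow 0 x = 1"
| "lodot_pow (Suc k) x = lodot x (lodot_pow k x)"

definition game_form :: "'i set \<Rightarrow> ('i \<Rightarrow> 'a set) \<Rightarrow> 's set \<Rightarrow> (('i \<Rightarrow> 'a) \<Rightarrow> 's) \<Rightarrow> bool" where
  "game_form N Str S out \<longleftrightarrow>
     finite N \<and> 2 \<le> card N \<and> (\<exists>a b. a \<in> S \<and> b \<in> S \<and> a \<noteq> b) \<and>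
     (\<forall>i\<in>N. Str i \<noteq> {}) \<and> out \<in> (PiE N Str) \<rightarrow> S"

definition combine :: "'i set \<Rightarrow> ('i \<Rightarrow> 'a) \<Rightarrow> ('i \<Rightarrow> 'a) \<Rightarrow> ('i \<Rightarrow> 'a)" where
  "combine C sC sD = (\<lambda>i. if i \<in> C then sC i else sD i)"

definition effG :: "'i set \<Rightarrow> ('i \<Rightarrow> 'a set) \<Rightarrow> (('i \<Rightarrow> 'a) \<Rightarrow> 's) \<Rightarrow> 'i set \<Rightarrow> ('s \<Rightarrow> real) \<Rightarrow> real" where
  "effG N Str out C f =
     Max ((\<lambda>sC. Min ((\<lambda>sD. f (out (combine C sC sD))) ` PiE (N - C) Str)) ` PiE C Str)"

definition eff_fun :: "nat \<Rightarrow> 'i set \<Rightarrow> 's set \<Rightarrow> ('i set \<Rightarrow> ('s \<Rightarrow> real) \<Rightarrow> real) \<Rightarrow> bool" where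
  "eff_fun n N S E \<longleftrightarrow> (\<forall>C. C \<subseteq> N \<longrightarrow> (\<forall>f \<in> S \<rightarrow> Luk n. E C f \<in> Luk n))"

definition outcome_monotonic :: "nat \<Rightarrow> 'i set \<Rightarrow> 's set \<Rightarrow> ('i set \<Rightarrow> ('s \<Rightarrow> real) \<Rightarrow> real) \<Rightarrow> bool" where
  "outcome_monotonic n N S E \<longleftrightarrow>
     (\<forall>C. C \<subseteq> N \<longrightarrow> (\<forall>f \<in> S \<rightarrow> Luk n. \<forall>g \<in> S \<rightarrow> Luk n.
        (\<forall>s\<in>S. g s \<le> f s) \<longrightarrow> E C g \<le> E C f))"

definition N_maximal :: "nat \<Rightarrow> 'i set \<Rightarrow> 's set \<Rightarrow> ('i set \<Rightarrow> ('s \<Rightarrow> real) \<Rightarrow> real) \<Rightarrow> bool" where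
  "N_maximal n N S E \<longleftrightarrow>
     (\<forall>f \<in> S \<rightarrow> Luk n. lneg (E {} (\<lambda>s. lneg (f s))) \<le> E N f)"

definition superadditive :: "nat \<Rightarrow> 'i set \<Rightarrow> 's set \<Rightarrow> ('i set \<Rightarrow> ('s \<Rightarrow> real) \<Rightarrow> real) \<Rightarrow> bool" where
  "superadditive n N S E \<longleftrightarrow>
     (\<forall>C1 C2. C1 \<subseteq> N \<longrightarrow> C2 \<subseteq> N \<longrightarrow> C1 \<inter> C2 = {} \<longrightarrow>
       (\<forall>f \<in> S \<rightarrow> Luk n. \<forall>g \<in> S \<rightarrow> Luk n.
          min (E C1 f) (E C2 g) \<le> E (C1 \<union> C2) (\<lambda>s. min (f s) (g s))))"

definition homogeneous :: "nat \<Rightarrow> 'i set \<Rightarrow> 's set \<Rightarrow> ('i set \<Rightarrow> ('s \<Rightarrow> real) \<Rightarrow> real) \<Rightarrow> bool" where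
  "homogeneous n N S E \<longleftrightarrow>
     (\<forall>C. C \<subseteq> N \<longrightarrow> (\<forall>f \<in> S \<rightarrow> Luk n.
        E C (\<lambda>s. loplus (f s) (f s)) = loplus (E C f) (E C f) \<and>
        E C (\<lambda>s. lodot (f s) (f s)) = lodot (E C f) (E C f)))"

definition liveness :: "'i set \<Rightarrow> ('i set \<Rightarrow> ('s \<Rightarrow> real) \<Rightarrow> real) \<Rightarrow> bool" where
  "liveness N E \<longleftrightarrow> (\<forall>C. C \<subseteq> N \<longrightarrow> E C (\<lambda>_. 1) = 1)"

definition safety :: "'i set \<Rightarrow> ('i set \<Rightarrow> ('s \<Rightarrow> real) \<Rightarrow> real) \<Rightarrow> bool" where
  "safety N E \<longleftrightarrow> (\<forall>C. C \<subseteq> N \<longrightarrow> E C (\<lambda>_. 0) = 0)"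

definition principal :: "nat \<Rightarrow> 's set \<Rightarrow> ('i set \<Rightarrow> ('s \<Rightarrow> real) \<Rightarrow> real) \<Rightarrow> bool" where
  "principal n S E \<longleftrightarrow>
     (\<exists>g \<in> S \<rightarrow> Luk n. \<forall>f \<in> S \<rightarrow> Luk n.
        E {} f = 1 \<longleftrightarrow> (\<forall>s\<in>S. lodot_pow n (g s) \<le> f s))"

definition playable :: "nat \<Rightarrow> 'i set \<Rightarrow> 's set \<Rightarrow> ('i set \<Rightarrow> ('s \<Rightarrow> real) \<Rightarrow> real) \<Rightarrow> bool" where
  "playable n N S E \<longleftrightarrow> eff_fun n N S E \<and> outcome_monotonic n N S E \<and> N_maximal n N S E \<and>
     superadditive n N S E \<and> homogeneous n N S E \<and> liveness N E \<and> safety N E"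

definition truly_playable :: "nat \<Rightarrow> 'i set \<Rightarrow> 's set \<Rightarrow> ('i set \<Rightarrow> ('s \<Rightarrow> real) \<Rightarrow> real) \<Rightarrow> bool" where
  "truly_playable n N S E \<longleftrightarrow> playable n N S E \<and> principal n S E"

end

theory Submission
  imports Defs
begin

lemma Luk_eq: "Luk n = (\<lambda>k. real k / real n) ` {..n}"
  unfolding Luk_def by auto

lemma Luk_finite: "finite (Luk n)"
  unfolding Luk_eq by simp

lemma Luk_bounds: "1 \<le> n \<Longrightarrow> x \<in> Luk n \<Longrightarrow> 0 \<le> x \<and> x \<le> 1"
  unfolding Luk_def by auto

lemma Luk_0: "0 \<in> Luk n"
  unfolding Luk_def by force

lemma Luk_1: "1 \<le> n \<Longrightarrow> 1 \<in> Luk n"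
  unfolding Luk_def by (rule CollectI, rule exI[of _ n]) auto

lemma lodot_pow_1: "lodot_pow k 1 = 1"
  by (induction k) (auto simp: lodot_def)

lemma lodot_pow_0_le: "lodot_pow k 0 \<le> 1"
  by (induction k) (auto simp: lodot_def)

lemma lodot_pow_0: "1 \<le> k \<Longrightarrow> lodot_pow k 0 = 0"
  by (cases k) (auto simp: lodot_def lodot_pow_0_le)

context
  fixes N :: "'i set" and Str :: "'i \<Rightarrow> 'a set" and S :: "'s set" and out :: "('i \<Rightarrow> 'a) \<Rightarrow> 's"
  assumes gf: "game_form N Str S out"
begin

lemma PiE_ne: "C \<subseteq> N \<Longrightarrow> PiE C Str \<noteq> {}"
  using gf unfolding game_form_def by (auto simp: PiE_eq_empty_iff)

lemma comb_in: "C \<subseteq> N \<Longrightarrow> sC \<in> PiE C Str \<Longrightarrow> sD \<in> PiE (N-C) Str \<Longrightarrow> combine C sC sD \<in> PiE N Str"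
  by (auto simp: combine_def PiE_def Pi_def extensional_def)

lemma out_in: "\<sigma> \<in> PiE N Str \<Longrightarrow> out \<sigma> \<in> S"
proof -
  assume a: "\<sigma> \<in> PiE N Str"
  have "out \<in> PiE N Str \<rightarrow> S" using gf unfolding game_form_def by (elim conjE)
  then show ?thesis using a by (rule funcset_mem)
qed

lemma inner_props:
  assumes "C \<subseteq> N" "finite (f ` S)" "sC \<in> PiE C Str"
  shows "finite ((\<lambda>sD. f (out (combine C sC sD))) ` PiE (N - C) Str)"
    "(\<lambda>sD. f (out (combine C sC sD))) ` PiE (N - C) Str \<noteq> {}"
    "(\<lambda>sD. f (out (combine C sC sD))) ` PiE (N - C) Str \<subseteq> f ` S"
proof -
  show 3: "(\<lambda>sD. f (out (combine C sC sD))) ` PiE (N - C) Str \<subseteq> f ` S"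
  proof
    fix x assume "x \<in> (\<lambda>sD. f (out (combine C sC sD))) ` PiE (N - C) Str"
    then obtain sD where sD: "sD \<in> PiE (N - C) Str" and x: "x = f (out (combine C sC sD))" by blast
    have "out (combine C sC sD) \<in> S" by (rule out_in[OF comb_in[OF assms(1) assms(3) sD]])
    then show "x \<in> f ` S" using x by blast
  qed
  then show "finite ((\<lambda>sD. f (out (combine C sC sD))) ` PiE (N - C) Str)"
    by (rule finite_subset[OF _ assms(2)])
  show "(\<lambda>sD. f (out (combine C sC sD))) ` PiE (N - C) Str \<noteq> {}"
    using PiE_ne[of "N - C"] by auto
qed

lemma outer_props:
  assumes "C \<subseteq> N" "finite (f ` S)"
  shows "finite ((\<lambda>sC. Min ((\<lambda>sD. f (out (combine C sC sD))) ` PiE (N - C) Str)) ` PiE C Str)"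
    "(\<lambda>sC. Min ((\<lambda>sD. f (out (combine C sC sD))) ` PiE (N - C) Str)) ` PiE C Str \<noteq> {}"
    "(\<lambda>sC. Min ((\<lambda>sD. f (out (combine C sC sD))) ` PiE (N - C) Str)) ` PiE C Str \<subseteq> f ` S"
proof -
  show 3: "(\<lambda>sC. Min ((\<lambda>sD. f (out (combine C sC sD))) ` PiE (N - C) Str)) ` PiE C Str \<subseteq> f ` S"
  proof
    fix x assume "x \<in> (\<lambda>sC. Min ((\<lambda>sD. f (out (combine C sC sD))) ` PiE (N - C) Str)) ` PiE C Str"
    then obtain sC where sC: "sC \<in> PiE C Str" and x: "x = Min ((\<lambda>sD. f (out (combine C sC sD))) ` PiE (N - C) Str)"
      by (rule imageE)
    have "x \<in> (\<lambda>sD. f (out (combine C sC sD))) ` PiE (N - C) Str"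
      unfolding x by (rule Min_in[OF inner_props(1,2)[OF assms sC]])
    then show "x \<in> f ` S" by (rule subsetD[OF inner_props(3)[OF assms sC]])
  qed
  then show "finite ((\<lambda>sC. Min ((\<lambda>sD. f (out (combine C sC sD))) ` PiE (N - C) Str)) ` PiE C Str)"
    by (rule finite_subset[OF _ assms(2)])
  show "(\<lambda>sC. Min ((\<lambda>sD. f (out (combine C sC sD))) ` PiE (N - C) Str)) ` PiE C Str \<noteq> {}"
    using PiE_ne[OF assms(1)] by simp
qed

lemma effG_ge:
  assumes "C \<subseteq> N" "finite (f ` S)"
  shows "v \<le> effG N Str out C f \<longleftrightarrow>
    (\<exists>sC\<in>PiE C Str. \<forall>sD\<in>PiE (N-C) Str. v \<le> f (out (combine C sC sD)))"
proof -
  have "v \<le> effG N Str out C f \<longleftrightarrow>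
    (\<exists>sC\<in>PiE C Str. v \<le> Min ((\<lambda>sD. f (out (combine C sC sD))) ` PiE (N - C) Str))"
    unfolding effG_def using Max_ge_iff[OF outer_props(1,2)[OF assms]] by auto
  also have "\<dots> \<longleftrightarrow> (\<exists>sC\<in>PiE C Str. \<forall>sD\<in>PiE (N-C) Str. v \<le> f (out (combine C sC sD)))"
    using Min_ge_iff[OF inner_props(1,2)[OF assms]] by auto
  finally show ?thesis .
qed

lemma effG_attained:
  assumes "C \<subseteq> N" "finite (f ` S)"
  shows "\<exists>sC\<in>PiE C Str. \<exists>sD\<in>PiE (N-C) Str. effG N Str out C f = f (out (combine C sC sD))"
proof -
  have "effG N Str out C f \<in> (\<lambda>sC. Min ((\<lambda>sD. f (out (combine C sC sD))) ` PiE (N - C) Str)) ` PiE C Str"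
    unfolding effG_def using Max_in[OF outer_props(1,2)[OF assms]] .
  then obtain sC where sC: "sC \<in> PiE C Str" and e: "effG N Str out C f = Min ((\<lambda>sD. f (out (combine C sC sD))) ` PiE (N - C) Str)"
    by (auto simp only: image_iff)
  have "Min ((\<lambda>sD. f (out (combine C sC sD))) ` PiE (N - C) Str) \<in> (\<lambda>sD. f (out (combine C sC sD))) ` PiE (N - C) Str"
    by (rule Min_in[OF inner_props(1,2)[OF assms sC]])
  then obtain sD where sD: "sD \<in> PiE (N - C) Str" and e2: "Min ((\<lambda>sD. f (out (combine C sC sD))) ` PiE (N - C) Str) = f (out (combine C sC sD))"
    by (auto simp only: image_iff)
  show ?thesis using sC sD e e2 by metis
qed

lemma effG_in:
  assumes "C \<subseteq> N" "finite (f ` S)"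
  shows "effG N Str out C f \<in> f ` S"
proof -
  obtain sC sD where sC: "sC \<in> PiE C Str" and sD: "sD \<in> PiE (N-C) Str"
    and e: "effG N Str out C f = f (out (combine C sC sD))"
    using effG_attained[OF assms] by (elim bexE)
  have "out (combine C sC sD) \<in> S" by (rule out_in[OF comb_in[OF assms(1) sC sD]])
  then show ?thesis unfolding e by (rule imageI)
qed

lemma effG_mono_comm:
  assumes "C \<subseteq> N" "finite (f ` S)" "mono h"
  shows "effG N Str out C (\<lambda>s. h (f s)) = h (effG N Str out C f)"
proof -
  have inn: "Min ((\<lambda>sD. h (f (out (combine C sC sD)))) ` PiE (N - C) Str)
      = h (Min ((\<lambda>sD. f (out (combine C sC sD))) ` PiE (N - C) Str))" if "sC \<in> PiE C Str" for sC
    using mono_Min_commute[OF assms(3) inner_props(1,2)[OF assms(1,2) that]]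
    by (simp add: image_image)
  have "effG N Str out C (\<lambda>s. h (f s)) =
      Max (h ` ((\<lambda>sC. Min ((\<lambda>sD. f (out (combine C sC sD))) ` PiE (N - C) Str)) ` PiE C Str))"
    unfolding effG_def image_image using inn by (metis (no_types, lifting) image_cong)
  also have "\<dots> = h (effG N Str out C f)"
    unfolding effG_def using mono_Max_commute[OF assms(3) outer_props(1,2)[OF assms(1,2)]] by simp
  finally show ?thesis .
qed


lemma fin: "f \<in> S \<rightarrow> Luk n \<Longrightarrow> finite (f ` S)"
  by (rule finite_subset[OF _ Luk_finite]) auto

lemma finc: "finite ((\<lambda>_. c) ` S)"
  by (rule finite_subset[of _ "{c}"]) auto

lemma inL: "C \<subseteq> N \<Longrightarrow> f \<in> S \<rightarrow> Luk n \<Longrightarrow> effG N Str out C f \<in> Luk n"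
proof -
  assume C: "C \<subseteq> N" and f: "f \<in> S \<rightarrow> Luk n"
  have "effG N Str out C f \<in> f ` S" by (rule effG_in[OF C fin[OF f]])
  moreover have "f ` S \<subseteq> Luk n" using f by blast
  ultimately show ?thesis by blast
qed

lemma P_ef: "eff_fun n N S (effG N Str out)"
  unfolding eff_fun_def using inL by simp

lemma P_om: "outcome_monotonic n N S (effG N Str out)"
  unfolding outcome_monotonic_def
proof (intro allI impI ballI)
  fix C f g assume C: "C \<subseteq> N" and f: "f \<in> S \<rightarrow> Luk n" and g: "g \<in> S \<rightarrow> Luk n"
    and le: "\<forall>s\<in>S. g s \<le> f s"
  obtain sC where sC: "sC \<in> PiE C Str"
    and h: "\<forall>sD\<in>PiE (N-C) Str. effG N Str out C g \<le> g (out (combine C sC sD))"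
    using effG_ge[OF C fin[OF g], of "effG N Str out C g"] by auto
  have "effG N Str out C g \<le> f (out (combine C sC sD))" if sD: "sD \<in> PiE (N-C) Str" for sD
  proof -
    have "out (combine C sC sD) \<in> S" using out_in comb_in[OF C sC sD] by blast
    then have "g (out (combine C sC sD)) \<le> f (out (combine C sC sD))" using le by blast
    then show ?thesis using h sD by force
  qed
  then show "effG N Str out C g \<le> effG N Str out C f"
    using effG_ge[OF C fin[OF f], of "effG N Str out C g"] sC by blast
qed

lemma P_nm: "N_maximal n N S (effG N Str out)"
  unfolding N_maximal_def
proof
  fix f assume f: "f \<in> S \<rightarrow> Luk n"
  have fh: "finite ((\<lambda>s. lneg (f s)) ` S)"
    using finite_imageI[OF fin[OF f], of lneg] by (simp add: image_image)
  obtain sC sD where sC: "sC \<in> PiE {} Str" and sD: "sD \<in> PiE (N - {}) Str"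
    and e: "effG N Str out {} (\<lambda>s. lneg (f s)) = lneg (f (out (combine {} sC sD)))"
    using effG_attained[OF empty_subsetI fh] by (elim bexE)
  have c0: "combine {} sC sD = sD" by (simp add: combine_def)
  have sD': "sD \<in> PiE N Str" using sD by simp
  have c1: "f (out sD) \<le> f (out (combine N sD x))" if "x \<in> PiE {} Str" for x
  proof -
    have "combine N sD x = sD"
    proof
      fix i show "combine N sD x i = sD i"
      proof (cases "i \<in> N")
        case True then show ?thesis by (simp add: combine_def)
      next
        case False
        have "x i = undefined" using that by (rule PiE_arb) simp
        moreover have "sD i = undefined" using sD' False by (rule PiE_arb)
        ultimately show ?thesis using False by (simp add: combine_def)
      qed
    qed
    then show ?thesis by simp
  qed
  have "f (out sD) \<le> effG N Str out N f"
    using effG_ge[OF order_refl fin[OF f], of "f (out sD)"] sD' c1 by blast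
  then show "lneg (effG N Str out {} (\<lambda>s. lneg (f s))) \<le> effG N Str out N f"
    using e c0 by (simp add: lneg_def)
qed

lemma P_sa: "superadditive n N S (effG N Str out)"
  unfolding superadditive_def
proof (intro allI impI ballI)
  fix C1 C2 f g assume C1: "C1 \<subseteq> N" and C2: "C2 \<subseteq> N" and dj: "C1 \<inter> C2 = {}"
    and f: "f \<in> S \<rightarrow> Luk n" and g: "g \<in> S \<rightarrow> Luk n"
  define v where "v = min (effG N Str out C1 f) (effG N Str out C2 g)"
  obtain s1 where s1: "s1 \<in> PiE C1 Str"
    and h1: "\<forall>sD\<in>PiE (N-C1) Str. v \<le> f (out (combine C1 s1 sD))"
    using effG_ge[OF C1 fin[OF f], of v] unfolding v_def by auto
  obtain s2 where s2: "s2 \<in> PiE C2 Str"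
    and h2: "\<forall>sD\<in>PiE (N-C2) Str. v \<le> g (out (combine C2 s2 sD))"
    using effG_ge[OF C2 fin[OF g], of v] unfolding v_def by auto
  have C12: "C1 \<union> C2 \<subseteq> N" using C1 C2 by auto
  have fg: "(\<lambda>s. min (f s) (g s)) \<in> S \<rightarrow> Luk n" using f g by (auto simp: min_def)
  have sC: "combine C1 s1 s2 \<in> PiE (C1 \<union> C2) Str"
    using s1 s2 by (auto simp: combine_def PiE_def Pi_def extensional_def)
  have "\<forall>sD\<in>PiE (N-(C1 \<union> C2)) Str. v \<le> min (f (out (combine (C1 \<union> C2) (combine C1 s1 s2) sD)))
       (g (out (combine (C1 \<union> C2) (combine C1 s1 s2) sD)))"
  proof
    fix sD assume sD: "sD \<in> PiE (N-(C1 \<union> C2)) Str"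
    have e1: "combine (C1 \<union> C2) (combine C1 s1 s2) sD = combine C1 s1 (combine C2 s2 sD)"
      by (auto simp: combine_def fun_eq_iff)
    have e2: "combine (C1 \<union> C2) (combine C1 s1 s2) sD = combine C2 s2 (combine C1 s1 sD)"
      using dj by (auto simp: combine_def fun_eq_iff)
    have m1: "combine C2 s2 sD \<in> PiE (N - C1) Str"
      using s2 sD dj C2 by (auto simp: combine_def PiE_def Pi_def extensional_def)
    have m2: "combine C1 s1 sD \<in> PiE (N - C2) Str"
      using s1 sD dj C1 by (auto simp: combine_def PiE_def Pi_def extensional_def)
    have a1: "v \<le> f (out (combine (C1 \<union> C2) (combine C1 s1 s2) sD))"
      unfolding e1 using h1 m1 by blast
    have a2: "v \<le> g (out (combine (C1 \<union> C2) (combine C1 s1 s2) sD))"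
      unfolding e2 using h2 m2 by blast
    show "v \<le> min (f (out (combine (C1 \<union> C2) (combine C1 s1 s2) sD)))
       (g (out (combine (C1 \<union> C2) (combine C1 s1 s2) sD)))"
      using a1 a2 by simp
  qed
  then show "min (effG N Str out C1 f) (effG N Str out C2 g)
      \<le> effG N Str out (C1 \<union> C2) (\<lambda>s. min (f s) (g s))"
    using effG_ge[OF C12 fin[OF fg], of v] sC unfolding v_def by blast
qed

lemma P_ho: "homogeneous n N S (effG N Str out)"
  unfolding homogeneous_def
proof (intro allI impI ballI conjI)
  fix C f assume C: "C \<subseteq> N" and f: "f \<in> S \<rightarrow> Luk n"
  have m1: "mono (\<lambda>x::real. loplus x x)" by (auto simp: mono_def loplus_def)
  have m2: "mono (\<lambda>x::real. lodot x x)" by (auto simp: mono_def lodot_def)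
  show "effG N Str out C (\<lambda>s. loplus (f s) (f s)) = loplus (effG N Str out C f) (effG N Str out C f)"
    using effG_mono_comm[OF C fin[OF f] m1] .
  show "effG N Str out C (\<lambda>s. lodot (f s) (f s)) = lodot (effG N Str out C f) (effG N Str out C f)"
    using effG_mono_comm[OF C fin[OF f] m2] .
qed

lemma const_val: "C \<subseteq> N \<Longrightarrow> effG N Str out C (\<lambda>_. c) = c"
  using effG_in[OF _ finc, of C c] by auto

lemma P_li: "liveness N (effG N Str out)"
  unfolding liveness_def using const_val by simp

lemma P_sf: "safety N (effG N Str out)"
  unfolding safety_def using const_val by simp

lemma P_pr:
  assumes n1: "1 \<le> n"
  shows "principal n S (effG N Str out)"
  unfolding principal_def
proof
  define g where "g = (\<lambda>s. if s \<in> out ` PiE N Str then 1 else (0::real))"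
  show "g \<in> S \<rightarrow> Luk n" using Luk_0 Luk_1[OF n1] by (auto simp: g_def)
  show "\<forall>f\<in>S \<rightarrow> Luk n. (effG N Str out {} f = 1) = (\<forall>s\<in>S. lodot_pow n (g s) \<le> f s)"
  proof
    fix f assume f: "f \<in> S \<rightarrow> Luk n"
    have le1: "effG N Str out {} f \<le> 1" using inL[OF _ f, of "{}"] Luk_bounds[OF n1] by blast
    have ne: "PiE {} Str \<noteq> {}" using PiE_ne[of "{}"] by simp
    have "effG N Str out {} f = 1 \<longleftrightarrow> 1 \<le> effG N Str out {} f" using le1 by auto
    also have "\<dots> \<longleftrightarrow> (\<exists>sC\<in>PiE {} Str. \<forall>sD\<in>PiE (N - {}) Str. 1 \<le> f (out (combine {} sC sD)))"
      using effG_ge[OF _ fin[OF f], of "{}" 1] by simp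
    also have "\<dots> \<longleftrightarrow> (\<forall>sD\<in>PiE N Str. 1 \<le> f (out sD))"
      using ne by (simp add: combine_def)
    also have "\<dots> \<longleftrightarrow> (\<forall>s\<in>S. lodot_pow n (g s) \<le> f s)"
    proof
      assume a: "\<forall>sD\<in>PiE N Str. 1 \<le> f (out sD)"
      show "\<forall>s\<in>S. lodot_pow n (g s) \<le> f s"
      proof
        fix s assume s: "s \<in> S"
        show "lodot_pow n (g s) \<le> f s"
        proof (cases "s \<in> out ` PiE N Str")
          case True then show ?thesis using a by (auto simp: g_def lodot_pow_1)
        next
          case False
          have "f s \<in> Luk n" using f s by blast
          then have "0 \<le> f s" using Luk_bounds[OF n1] by blast
          then show ?thesis using False by (simp add: g_def lodot_pow_0[OF n1])
        qed
      qed
    next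
      assume a: "\<forall>s\<in>S. lodot_pow n (g s) \<le> f s"
      show "\<forall>sD\<in>PiE N Str. 1 \<le> f (out sD)"
      proof
        fix sD assume sD: "sD \<in> PiE N Str"
        have "lodot_pow n (g (out sD)) \<le> f (out sD)" using a out_in[OF sD] by blast
        then show "1 \<le> f (out sD)" using sD by (simp add: g_def lodot_pow_1)
      qed
    qed
    finally show "(effG N Str out {} f = 1) = (\<forall>s\<in>S. lodot_pow n (g s) \<le> f s)" .
  qed
qed

end

theorem mainTheorem1:
  fixes n :: nat and N :: "'i set" and Str :: "'i \<Rightarrow> 'a set"
    and S :: "'s set" and out :: "('i \<Rightarrow> 'a) \<Rightarrow> 's"
  assumes "1 \<le> n" and "game_form N Str S out"
  shows "truly_playable n N S (effG N Str out)"
  unfolding truly_playable_def playable_def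
  using P_ef[OF assms(2)] P_om[OF assms(2)] P_nm[OF assms(2)] P_sa[OF assms(2)]
    P_ho[OF assms(2)] P_li[OF assms(2)] P_sf[OF assms(2)] P_pr[OF assms(2) assms(1)] by simp

end
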